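(* Let $q$ be a prime power such that none of $q-1$, $q$, $q+1$ is a power of $2$ (i.e. $\{q-1,q,q+1\}\cap\{2^k : k\in\mathbb{N}\}=\varnothing$), and let $G=\mathrm{SL}(2,q)$. If $x$ is a $2$-element of $G$, then $q-1$ or $q+1$ divides $|C_G(x)|$. In particular, $C_G(x)$ is not a $2$-group. *)

theory Defs
  imports "HOL-Analysis.Analysis"
begin

definition SL2 :: "('a::field ^ 2 ^ 2) set" where
  "SL2 = {A. det A = 1}"

primrec mpow :: "'a::semiring_1 ^ 'n ^ 'n \<Rightarrow> nat \<Rightarrow> 'a ^ 'n ^ 'n" where
  "mpow A 0 = mat 1"
| "mpow A (Suc n) = A ** mpow A n"

definition two_element :: "'a::semiring_1 ^ 'n ^ 'n \<Rightarrow> bool" where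
  "two_element x \<longleftrightarrow> (\<exists>k. mpow x (2 ^ k) = mat 1)"

definition centralizer_SL2 :: "'a::field ^ 2 ^ 2 \<Rightarrow> ('a ^ 2 ^ 2) set" where
  "centralizer_SL2 x = {g \<in> SL2. g ** x = x ** g}"

end

theory Submission
  imports Defs
begin

lemma dvd_pow2: "(m::nat) dvd 2^k \<Longrightarrow> \<exists>i. m = 2^i"
proof (induction m arbitrary: k rule: less_induct)
  case (less m)
  have m0: "m \<noteq> 0" using less.prems by (metis dvd_0_left_iff power_not_zero zero_neq_numeral)
  show ?case
  proof (cases "even m")
    case True
    then obtain m' where m': "m = 2*m'" by blast
    have k0: "k \<noteq> 0"
    proof
      assume "k = 0"
      then have "m dvd 1" using less.prems by simp
      then show False using True by simp
    qed
    then have "2*m' dvd 2*2^(k-1)" using less.prems m' by (metis power_Suc Suc_pred' neq0_conv)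
    then have "m' dvd 2^(k-1)" by simp
    moreover have "m' < m" using m' m0 by simp
    ultimately obtain i where "m' = 2^i" using less.IH by blast
    then show ?thesis using m' by (metis power_Suc)
  next
    case False
    then have "coprime m (2^k)" by simp
    then have "m = 1" using less.prems by (meson coprime_common_divisor_nat dvd_refl)
    then show ?thesis by (metis power_0)
  qed
qed


definition mk :: "'a::field \<Rightarrow> 'a \<Rightarrow> 'a \<Rightarrow> 'a \<Rightarrow> 'a^2^2" where
  "mk a b c d = (\<chi> i j. if i = 1 then (if j = 1 then a else b) else (if j = 1 then c else d))"

lemma mk_nth [simp]: "mk a b c d $ 1 $ 1 = a" "mk a b c d $ 1 $ 2 = b"
  "mk a b c d $ 2 $ 1 = c" "mk a b c d $ 2 $ 2 = d"
  by (simp_all add: mk_def)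

lemma mat_eq2: "(A::'a^2^2) = B \<longleftrightarrow> A$1$1 = B$1$1 \<and> A$1$2 = B$1$2 \<and> A$2$1 = B$2$1 \<and> A$2$2 = B$2$2"
  by (simp add: vec_eq_iff forall_2 conj_ac)

lemma mk_surj: "(A::'a::field^2^2) = mk (A$1$1) (A$1$2) (A$2$1) (A$2$2)"
  by (simp add: mat_eq2)

lemma mk_eq [simp]: "mk a b c d = mk a' b' c' d' \<longleftrightarrow> a = a' \<and> b = b' \<and> c = c' \<and> d = d'"
  by (simp add: mat_eq2)

lemma mk_mult [simp]: "mk a b c d ** mk e f g h = mk (a*e+b*g) (a*f+b*h) (c*e+d*g) (c*f+d*h)"
  by (simp add: mat_eq2 matrix_matrix_mult_def sum_2)

lemma mk_det [simp]: "det (mk a b c d) = a*d - b*c"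
  by (simp add: det_2)

lemma mat1_mk: "(mat 1 :: 'a::field^2^2) = mk 1 0 0 1"
  by (simp add: mat_eq2 mat_def)



lemma char2_aux:
  fixes S :: "'a::{field,finite} set"
  assumes two: "(2::'a) = 0"
  shows "0 \<in> S \<Longrightarrow> (\<forall>x\<in>S. \<forall>y\<in>S. x + y \<in> S) \<Longrightarrow> \<exists>k. card S * 2^k = CARD('a)"
proof (induction "card (UNIV - S)" arbitrary: S rule: less_induct)
  case less
  show ?case
  proof (cases "S = UNIV")
    case True then show ?thesis by (intro exI[of _ 0]) simp
  next
    case False
    then obtain a where a: "a \<notin> S" by blast
    have neg: "x + x = 0" for x :: 'a
      using two by (metis mult_2 mult_zero_left)
    define S' where "S' = S \<union> (\<lambda>s. a + s) ` S"
    have cl: "\<forall>x\<in>S'. \<forall>y\<in>S'. x + y \<in> S'"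
    proof (intro ballI)
      fix x y assume "x \<in> S'" "y \<in> S'"
      have cS: "\<And>u v. u \<in> S \<Longrightarrow> v \<in> S \<Longrightarrow> u + v \<in> S" using less.prems(2) by blast
      have e1: "a + u + v = a + (u + v)" "u + (a + v) = a + (u + v)" "(a + u) + (a + v) = u + v" for u v
      proof -
        show "a + u + v = a + (u + v)" "u + (a + v) = a + (u + v)" by (simp_all add: algebra_simps)
        have "(a + u) + (a + v) = (a + a) + (u + v)" by (simp add: algebra_simps)
        then show "(a + u) + (a + v) = u + v" using neg[of a] by simp
      qed
      from \<open>x \<in> S'\<close> \<open>y \<in> S'\<close> show "x + y \<in> S'" unfolding S'_def
      proof (elim UnE imageE)
        fix u v assume "x = a + u" "u \<in> S" "y \<in> S" then show "x + y \<in> S \<union> (+) a ` S" using cS e1 by auto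
      next
        fix u v assume "y = a + u" "u \<in> S" "x \<in> S" then show "x + y \<in> S \<union> (+) a ` S" using cS e1 by auto
      next
        fix u v assume "x = a + u" "u \<in> S" "y = a + v" "v \<in> S" then show "x + y \<in> S \<union> (+) a ` S" using cS e1 by auto
      qed (use cS in auto)
    qed
    have z: "0 \<in> S'" using less.prems unfolding S'_def by auto
    have "card (UNIV - S') < card (UNIV - S)"
    proof (rule psubset_card_mono)
      have aS': "a \<in> S'" unfolding S'_def using less.prems(1) by (metis UnI2 add_0_right imageI)
      have "S \<subseteq> S'" unfolding S'_def by blast
      then show "UNIV - S' \<subset> UNIV - S" using aS' a by blast
    qed simp
    from less.hyps[OF this z cl] obtain k where k: "card S' * 2^k = CARD('a)" by blast
    have disj: "S \<inter> (\<lambda>s. a + s) ` S = {}"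
    proof (rule ccontr)
      assume "S \<inter> (\<lambda>s. a + s) ` S \<noteq> {}"
      then obtain s t where st: "s \<in> S" "t \<in> S" "s = a + t" by blast
      have "s + t = a + (t + t)" using st(3) by (simp add: algebra_simps)
      then have "a = s + t" using neg[of t] by simp
      moreover have "s + t \<in> S" using st(1,2) less.prems(2) by blast
      ultimately show False using a by simp
    qed
    have "card S' = card S + card ((\<lambda>s. a + s) ` S)"
      unfolding S'_def by (rule card_Un_disjoint) (use disj in auto)
    also have "card ((\<lambda>s. a + s) ` S) = card S"
      by (rule card_image) (auto simp: inj_on_def)
    finally have "card S' = 2 * card S" by simp
    with k show ?thesis by (intro exI[of _ "Suc k"]) (simp add: ac_simps)
  qed
qed

lemma char2_card:
  assumes two: "(2::'a::{field,finite}) = 0"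
  shows "\<exists>k. CARD('a) = 2^k"
  using char2_aux[OF two, of "{0}"] by (auto intro: sym)



lemma card_nonzero: "card (UNIV - {0::'a::{field,finite}}) = CARD('a) - 1"
  by (simp add: card_Diff_subset)

lemma card_T:
  "card {(a,b,c,d). (a::'a::{field,finite})*d - b*c = 1} = CARD('a) * (CARD('a) - 1) * (CARD('a) + 1)"
proof -
  let ?q = "CARD('a)"
  let ?N = "UNIV - {0::'a}"
  define T1 where "T1 = (\<lambda>(a,b,c). (a,b,c,(1+b*c)/a)) ` (?N \<times> (UNIV::'a set) \<times> (UNIV::'a set))"
  define T0 where "T0 = (\<lambda>(b,d). (0::'a,b,-1/b,d)) ` (?N \<times> (UNIV::'a set))"
  have eq: "{(a,b,c,d). (a::'a)*d - b*c = 1} = T1 \<union> T0"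
  proof (intro equalityI subsetI)
    fix x assume "x \<in> {(a,b,c,d). (a::'a)*d - b*c = 1}"
    then obtain a b c d where x: "x = (a,b,c,d)" "a*d - b*c = 1" by auto
    show "x \<in> T1 \<union> T0"
    proof (cases "a = 0")
      case True
      have b0: "b \<noteq> 0" using x True by auto
      have "-(b*c) = 1" using x True by simp
      hence "c * b = -1" by (metis minus_equation_iff mult.commute)
      with b0 have "c = -1/b" by (simp add: field_simps)
      note b0 this
      then show ?thesis unfolding T0_def using x True by (auto intro!: image_eqI[of _ _ "(b,d)"])
    next
      case False
      then have "d = (1+b*c)/a" using x by (auto simp: field_simps)
      then show ?thesis unfolding T1_def using x False by (auto intro!: image_eqI[of _ _ "(a,b,c)"])
    qed
  next
    fix x assume "x \<in> T1 \<union> T0"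
    then show "x \<in> {(a,b,c,d). (a::'a)*d - b*c = 1}"
    proof
      assume "x \<in> T1"
      then obtain a b c where "x = (a,b,c,(1+b*c)/a)" "a \<noteq> 0" unfolding T1_def by auto
      then show ?thesis by simp
    next
      assume "x \<in> T0"
      then obtain b d where "x = (0,b,-1/b,d)" "b \<noteq> 0" unfolding T0_def by auto
      then show ?thesis by simp
    qed
  qed
  have "card T1 = (?q - 1) * ?q * ?q" 
    unfolding T1_def by (subst card_image) (auto simp: inj_on_def card_cartesian_product card_nonzero)
  moreover have "card T0 = (?q - 1) * ?q" 
    unfolding T0_def by (subst card_image) (auto simp: inj_on_def card_cartesian_product card_nonzero)
  moreover have "T1 \<inter> T0 = {}" unfolding T1_def T0_def by auto
  ultimately have "card (T1 \<union> T0) = (?q - 1) * ?q * ?q + (?q - 1) * ?q"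
    by (simp add: card_Un_disjoint)
  also have "\<dots> = ?q * (?q - 1) * (?q + 1)" by (simp add: algebra_simps)
  finally show ?thesis using eq by simp
qed

lemma card_SL2: "card (SL2 :: ('a::{field,finite}^2^2) set) = CARD('a) * (CARD('a) - 1) * (CARD('a) + 1)"
proof -
  have eq: "SL2 = (\<lambda>(a,b,c,d). mk a b c d) ` {(a,b,c,d). (a::'a)*d - b*c = 1}"
  proof (intro equalityI subsetI)
    fix A :: "'a^2^2" assume "A \<in> SL2"
    then show "A \<in> (\<lambda>(a,b,c,d). mk a b c d) ` {(a,b,c,d). (a::'a)*d - b*c = 1}"
      unfolding SL2_def
      by (intro image_eqI[of _ _ "(A$1$1, A$1$2, A$2$1, A$2$2)"]) (auto simp: det_2 intro: mk_surj)
  qed (auto simp: SL2_def)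
  have inj: "inj_on (\<lambda>(a,b,c,d). mk a b c d) {(a,b,c,d). (a::'a)*d - b*c = 1}"
    by (rule inj_onI) auto
  show ?thesis unfolding eq card_image[OF inj] by (rule card_T)
qed



lemma conic_split:
  fixes e :: "'a::{field,finite}"
  assumes two: "(2::'a) \<noteq> 0" and e: "e \<noteq> 0"
  shows "card {(u,b). u^2 - e^2*b^2 = (1::'a)} = CARD('a) - 1"
proof -
  let ?D = "{(u,b). u^2 - e^2*b^2 = (1::'a)}"
  let ?H = "{(P,R). P*R = (1::'a)}"
  have four: "(4::'a) \<noteq> 0" using two by (metis mult_2 numeral_Bit0 mult_eq_0_iff)
  have bij: "bij_betw (\<lambda>(u,b). (u - e*b, u + e*b)) ?D ?H"
  proof (rule bij_betwI[where g = "\<lambda>(P,R). ((P+R)/2, (R-P)/(2*e))"])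
    show "(\<lambda>(u,b). (u - e*b, u + e*b)) \<in> ?D \<rightarrow> ?H"
      by (auto simp: power2_eq_square algebra_simps)
    show "(\<lambda>(P,R). ((P+R)/2, (R-P)/(2*e))) \<in> ?H \<rightarrow> ?D"
      using two e four by (auto simp: power2_eq_square field_simps)
    show "(\<lambda>(P,R). ((P+R)/2, (R-P)/(2*e))) ((\<lambda>(u,b). (u - e*b, u + e*b)) x) = x" for x
      using two e four by (cases x) (auto simp: field_simps)
    show "(\<lambda>(u,b). (u - e*b, u + e*b)) ((\<lambda>(P,R). ((P+R)/2, (R-P)/(2*e))) y) = y" for y
      using two e four by (cases y) (auto simp: field_simps)
  qed
  have H: "?H = (\<lambda>P. (P, 1/P)) ` (UNIV - {0})"
  proof (intro equalityI subsetI)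
    fix y assume "y \<in> ?H"
    then obtain P R where "y = (P,R)" "P*R = 1" by auto
    moreover have "P \<noteq> 0" using \<open>P*R = 1\<close> by auto
    ultimately show "y \<in> (\<lambda>P. (P, 1/P)) ` (UNIV - {0})"
      by (auto intro!: image_eqI[of _ _ P] simp: eq_divide_eq mult.commute)
  qed (auto split: if_splits)
  have "card ?H = CARD('a) - 1"
    unfolding H by (subst card_image) (auto simp: inj_on_def card_nonzero)
  with bij_betw_same_card[OF bij] show ?thesis by simp
qed

lemma conic_nonsplit:
  fixes d :: "'a::{field,finite}"
  assumes two: "(2::'a) \<noteq> 0" and ns: "\<forall>e. e^2 \<noteq> d"
  shows "card {(u,b). u^2 - d*b^2 = (1::'a)} = CARD('a) + 1"
proof -
  let ?D = "{(u,b). u^2 - d*b^2 = (1::'a)}"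
  have d0: "d \<noteq> 0" using ns by (metis power_zero_numeral)
  have nz: "m^2 - d \<noteq> 0" for m using ns by auto
  define \<phi> where "\<phi> m = ((m^2+d)/(m^2-d), 2*m/(m^2-d))" for m
  define \<psi> where "\<psi> = (\<lambda>(u,b). d*b/(u-1))"
  have left: "\<psi> (\<phi> m) = m" for m
  proof -
    have "(m^2+d)/(m^2-d) - 1 = 2*d/(m^2-d)" using nz[of m] by (simp add: field_simps)
    moreover have nz2: "2*d/(m^2-d) \<noteq> 0" using nz[of m] d0 two by simp
    moreover have "d*(2*m/(m^2-d)) = m * (2*d/(m^2-d))" by (simp add: field_simps)
    ultimately show ?thesis unfolding \<phi>_def \<psi>_def by simp
  qed
  have img: "?D - {(1,0)} = range \<phi>"
  proof (intro equalityI subsetI)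
    fix y assume y: "y \<in> ?D - {(1,0)}"
    then obtain u b where ub: "y = (u,b)" "u^2 - d*b^2 = 1" "(u,b) \<noteq> (1,0)" by auto
    have u1: "u \<noteq> 1"
    proof
      assume "u = 1"
      then have "d*b^2 = 0" using ub by simp
      then have "b = 0" using d0 by simp
      then show False using ub \<open>u = 1\<close> by simp
    qed
    define m where "m = d*b/(u-1)"
    have u1': "u - 1 \<noteq> 0" using u1 by simp
    have "m^2 - d = 2*d/(u-1)"
    proof -
      have mu: "m * (u-1) = d*b" using u1' by (simp add: m_def)
      have db: "d*b^2 = u^2 - 1" using ub(2) by (simp add: algebra_simps)
      have "(m^2 - d)*(u-1)*(u-1) = (m*(u-1))^2 - d*(u-1)^2" by (simp add: algebra_simps power2_eq_square)
      also have "\<dots> = d*(d*b^2) - d*(u-1)^2" unfolding mu by (simp add: algebra_simps power2_eq_square)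
      also have "\<dots> = 2*d*(u-1)" unfolding db by (simp add: algebra_simps power2_eq_square)
      finally have "((m^2 - d)*(u-1))*(u-1) = (2*d)*(u-1)" by simp
      then have "(m^2 - d)*(u-1) = 2*d" using u1' by (simp only: mult_cancel_right) simp
      then show ?thesis using u1' by (simp add: eq_divide_eq)
    qed
    note hm = this
    have mu: "m * (u-1) = d*b" using u1' by (simp add: m_def)
    have dd: "2*d \<noteq> 0" using d0 two by simp
    have "(m^2+d)/(m^2-d) = 1 + 2*d/(m^2-d)" using nz[of m] by (simp add: field_simps)
    also have "2*d/(m^2-d) = u - 1" unfolding hm using dd u1' by simp
    finally have c1: "(m^2+d)/(m^2-d) = u" by simp
    have "2*m/(m^2-d) = (2*(m*(u-1)))/(2*d)" unfolding hm using dd u1' by (simp add: field_simps)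
    also have "\<dots> = b" unfolding mu using dd by (simp add: field_simps)
    finally have "\<phi> m = (u,b)" using c1 unfolding \<phi>_def by simp
    then show "y \<in> range \<phi>" using ub by (metis rangeI)
  next
    fix y assume "y \<in> range \<phi>"
    then obtain m where m: "y = \<phi> m" by auto
    have "((m^2+d)/(m^2-d))^2 - d*(2*m/(m^2-d))^2 = ((m^2+d)^2 - d*(2*m)^2)/(m^2-d)^2"
      by (simp add: power_divide diff_divide_distrib)
    also have "(m^2+d)^2 - d*(2*m)^2 = (m^2-d)^2" by (simp add: algebra_simps power2_eq_square)
    also have "(m^2-d)^2/(m^2-d)^2 = 1" using nz[of m] by simp
    finally have "((m^2+d)/(m^2-d))^2 - d*(2*m/(m^2-d))^2 = 1" .
    moreover have "(m^2+d)/(m^2-d) \<noteq> 1" using nz[of m] d0 two by (simp add: field_simps)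
    ultimately show "y \<in> ?D - {(1,0)}" using m unfolding \<phi>_def by auto
  qed
  have "inj \<phi>" by (metis left injI)
  then have c1: "card (?D - {(1,0)}) = CARD('a)" unfolding img by (simp add: card_image)
  have in1: "(1,0) \<in> ?D" by simp
  have "Suc (card (?D - {(1,0)})) = card ?D" by (rule card_Suc_Diff1[OF _ in1]) simp
  with c1 show ?thesis by simp
qed



lemma conic_gen:
  fixes t :: "'a::{field,finite}"
  assumes two: "(2::'a) \<noteq> 0" and t: "t^2 \<noteq> 4"
  shows "card {(a,b). a^2 + t*a*b + b^2 = (1::'a)} = CARD('a) - 1 \<or>
         card {(a,b). a^2 + t*a*b + b^2 = (1::'a)} = CARD('a) + 1"
proof -
  have four: "(4::'a) \<noteq> 0" using two by (metis mult_2 numeral_Bit0 mult_eq_0_iff)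
  define d where "d = t^2/4 - 1"
  have d0: "d \<noteq> 0" using t four unfolding d_def by (simp add: field_simps)
  let ?C = "{(a,b). a^2 + t*a*b + b^2 = (1::'a)}"
  let ?D = "{(u,b). u^2 - d*b^2 = (1::'a)}"
  have key: "(a + t*b/2)^2 - d*b^2 = a^2 + t*a*b + b^2" for a b
  proof -
    have h1: "(a + t*b/2)^2 = a^2 + 2*a*(t*b/2) + (t*b/2)^2" by (simp add: power2_sum)
    have h2: "2*a*(t*b/2) = t*a*b" using two by simp
    have h3: "(t*b/2)^2 = t^2/4*b^2" by (simp add: power_divide power_mult_distrib)
    show ?thesis unfolding d_def h1 h2 h3 by (simp add: algebra_simps)
  qed
  have bij: "bij_betw (\<lambda>(a,b). (a + t*b/2, b)) ?C ?D"
  proof (rule bij_betwI[where g = "\<lambda>(u,b). (u - t*b/2, b)"])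
    show "(\<lambda>(a,b). (a + t*b/2, b)) \<in> ?C \<rightarrow> ?D" using key by auto
    show "(\<lambda>(u,b). (u - t*b/2, b)) \<in> ?D \<rightarrow> ?C"
    proof
      fix y assume "y \<in> ?D"
      then obtain u b where "y = (u,b)" "u^2 - d*b^2 = 1" by auto
      moreover have "(u - t*b/2 + t*b/2)^2 - d*b^2 = (u - t*b/2)^2 + t*(u - t*b/2)*b + b^2"
        by (rule key)
      ultimately show "(\<lambda>(u,b). (u - t*b/2, b)) y \<in> ?C" by simp
    qed
  qed auto
  have "card ?D = CARD('a) - 1 \<or> card ?D = CARD('a) + 1"
  proof (cases "\<exists>e. e^2 = d")
    case True
    then obtain e where e: "e^2 = d" by auto
    then have "e \<noteq> 0" using d0 by auto
    then show ?thesis using conic_split[OF two, of e] e by simp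
  next
    case False
    then show ?thesis using conic_nonsplit[OF two, of d] by simp
  qed
  then show ?thesis using bij_betw_same_card[OF bij] by simp
qed

lemma centralizer_scalar:
  assumes "q = 0" "r = 0" "p = s"
  shows "centralizer_SL2 (mk p q r (s::'a::field)) = SL2"
proof -
  have "g ** mk p q r s = mk p q r s ** g" for g
  proof -
    obtain a b c d where "g = mk a b c d" using mk_surj by blast
    then show ?thesis using assms by (simp add: mult.commute)
  qed
  then show ?thesis unfolding centralizer_SL2_def by auto
qed


lemma centralizer_nonscalar:
  fixes p q r w :: "'a::field"
  assumes det: "p*w - q*r = 1" and ns: "\<not> (q = 0 \<and> r = 0 \<and> p = w)"
  shows "centralizer_SL2 (mk p q r w) =
     (\<lambda>(\<alpha>,\<beta>). mk (\<alpha>+\<beta>*p) (\<beta>*q) (\<beta>*r) (\<alpha>+\<beta>*w)) ` {(\<alpha>,\<beta>). \<alpha>^2 + (p+w)*\<alpha>*\<beta> + \<beta>^2 = 1}"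
    and "inj_on (\<lambda>(\<alpha>,\<beta>). mk (\<alpha>+\<beta>*p) (\<beta>*q) (\<beta>*r) (\<alpha>+\<beta>*w)) {(\<alpha>,\<beta>). \<alpha>^2 + (p+w)*\<alpha>*\<beta> + \<beta>^2 = 1}"
proof -
  have detf: "(\<alpha>+\<beta>*p)*(\<alpha>+\<beta>*w) - (\<beta>*q)*(\<beta>*r) = \<alpha>^2 + (p+w)*\<alpha>*\<beta> + \<beta>^2" for \<alpha> \<beta>
  proof -
    have "(\<alpha>+\<beta>*p)*(\<alpha>+\<beta>*w) - (\<beta>*q)*(\<beta>*r) = \<alpha>^2 + (p+w)*\<alpha>*\<beta> + \<beta>^2*(p*w - q*r)"
      by (simp add: algebra_simps power2_eq_square)
    then show ?thesis using det by simp
  qed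
  show "centralizer_SL2 (mk p q r w) =
     (\<lambda>(\<alpha>,\<beta>). mk (\<alpha>+\<beta>*p) (\<beta>*q) (\<beta>*r) (\<alpha>+\<beta>*w)) ` {(\<alpha>,\<beta>). \<alpha>^2 + (p+w)*\<alpha>*\<beta> + \<beta>^2 = 1}"
  proof (intro equalityI subsetI)
    fix g assume g: "g \<in> centralizer_SL2 (mk p q r w)"
    obtain a b c d where gd: "g = mk a b c d" using mk_surj by blast
    have dg: "a*d - b*c = 1" and comm: "mk a b c d ** mk p q r w = mk p q r w ** mk a b c d"
      using g unfolding gd centralizer_SL2_def SL2_def by auto
    then have cc: "a*p + b*r = p*a + q*c \<and> a*q + b*w = p*b + q*d \<and> c*p + d*r = r*a + w*c \<and> c*q + d*w = r*b + w*d"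
      by (simp only: mk_mult mk_eq)
    have cc1: "a*p + b*r = p*a + q*c" using cc by blast
    have e1: "b*r = q*c" using cc1 by (simp add: mult.commute)
    have e2: "a*q + b*w = p*b + q*d" and e3: "c*p + d*r = r*a + w*c" using cc by blast+
    obtain \<beta> where b1: "b = \<beta>*q" "c = \<beta>*r" "a - d = \<beta>*(p - w)"
    proof (cases "q = 0")
      case False
      show ?thesis
      proof (rule that[of "b/q"])
        show "b = b/q*q" using False by simp
        show "c = b/q*r" using False e1 by (simp add: field_simps)
        show "a - d = b/q*(p-w)" using False e2 by (simp add: field_simps)
      qed
    next
      case q0: True
      show ?thesis
      proof (cases "r = 0")
        case False
        show ?thesis
        proof (rule that[of "c/r"])
          show "b = c/r*q" using False e1 q0 by simp
          show "c = c/r*r" using False by simp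
          show "a - d = c/r*(p-w)" using False e3 by (simp add: field_simps)
        qed
      next
        case True
        then have ps: "p - w \<noteq> 0" using ns q0 by simp
        show ?thesis
        proof (rule that[of "(a-d)/(p-w)"])
          show "b = (a-d)/(p-w)*q" using ps e2 q0 True by (simp add: algebra_simps)
          show "c = (a-d)/(p-w)*r" using ps e3 q0 True by (simp add: algebra_simps)
          show "a - d = (a-d)/(p-w)*(p-w)" using ps by simp
        qed
      qed
    qed
    define \<alpha> where "\<alpha> = a - \<beta>*p"
    have "g = mk (\<alpha>+\<beta>*p) (\<beta>*q) (\<beta>*r) (\<alpha>+\<beta>*w)"
      unfolding gd \<alpha>_def using b1 by (simp add: algebra_simps)
    moreover then have "\<alpha>^2 + (p+w)*\<alpha>*\<beta> + \<beta>^2 = 1" using dg detf gd by simp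
    ultimately show "g \<in> (\<lambda>(\<alpha>,\<beta>). mk (\<alpha>+\<beta>*p) (\<beta>*q) (\<beta>*r) (\<alpha>+\<beta>*w)) ` {(\<alpha>,\<beta>). \<alpha>^2 + (p+w)*\<alpha>*\<beta> + \<beta>^2 = 1}"
      by auto
  next
    fix g assume "g \<in> (\<lambda>(\<alpha>,\<beta>). mk (\<alpha>+\<beta>*p) (\<beta>*q) (\<beta>*r) (\<alpha>+\<beta>*w)) ` {(\<alpha>,\<beta>). \<alpha>^2 + (p+w)*\<alpha>*\<beta> + \<beta>^2 = 1}"
    then obtain \<alpha> \<beta> where g: "g = mk (\<alpha>+\<beta>*p) (\<beta>*q) (\<beta>*r) (\<alpha>+\<beta>*w)" "\<alpha>^2 + (p+w)*\<alpha>*\<beta> + \<beta>^2 = 1"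
      by auto
    have "g \<in> SL2" unfolding SL2_def g(1) using g(2) detf by simp
    moreover have "g ** mk p q r w = mk p q r w ** g" unfolding g(1) by (simp add: algebra_simps)
    ultimately show "g \<in> centralizer_SL2 (mk p q r w)" unfolding centralizer_SL2_def by simp
  qed
  show "inj_on (\<lambda>(\<alpha>,\<beta>). mk (\<alpha>+\<beta>*p) (\<beta>*q) (\<beta>*r) (\<alpha>+\<beta>*w)) {(\<alpha>,\<beta>). \<alpha>^2 + (p+w)*\<alpha>*\<beta> + \<beta>^2 = 1}"
  proof (rule inj_onI)
    fix x y :: "'a \<times> 'a"
    assume hxy: "(\<lambda>(\<alpha>,\<beta>). mk (\<alpha>+\<beta>*p) (\<beta>*q) (\<beta>*r) (\<alpha>+\<beta>*w)) x = (\<lambda>(\<alpha>,\<beta>). mk (\<alpha>+\<beta>*p) (\<beta>*q) (\<beta>*r) (\<alpha>+\<beta>*w)) y"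
    obtain \<alpha> \<beta> where x: "x = (\<alpha>, \<beta>)" by (cases x)
    obtain \<alpha>' \<beta>' where y: "y = (\<alpha>', \<beta>')" by (cases y)
    have h: "\<alpha> + \<beta>*p = \<alpha>' + \<beta>'*p" "\<beta>*q = \<beta>'*q" "\<beta>*r = \<beta>'*r" "\<alpha> + \<beta>*w = \<alpha>' + \<beta>'*w"
      using hxy unfolding x y by (simp_all only: prod.case mk_eq)
    have "\<beta> = \<beta>'"
    proof (cases "q = 0 \<and> r = 0")
      case True
      then have "p \<noteq> w" using ns by auto
      moreover have "(\<beta> - \<beta>')*(p - w) = 0"
      proof -
        have d1: "(\<alpha> + \<beta>*p) - (\<alpha> + \<beta>*w) = (\<alpha>' + \<beta>'*p) - (\<alpha>' + \<beta>'*w)" by (simp only: h(1) h(4))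
        have "(\<beta> - \<beta>')*(p - w) = ((\<alpha> + \<beta>*p) - (\<alpha> + \<beta>*w)) - ((\<alpha>' + \<beta>'*p) - (\<alpha>' + \<beta>'*w))"
          by (simp add: algebra_simps)
        then show ?thesis using d1 by simp
      qed
      ultimately show ?thesis by simp
    next
      case False
      then show ?thesis using h(2,3) by auto
    qed
    then show "x = y" using h(1) unfolding x y by simp
  qed
qed


lemma ent11:
  fixes p q r w \<epsilon> N E :: "'a::field"
  assumes eps: "\<epsilon>*\<epsilon> = 1" and tr: "p + w = 2*\<epsilon>" and det: "p*w - q*r = 1"
  shows "p*(E*(1 + N*(\<epsilon>*p - 1))) + q*(E*(N*\<epsilon>*r)) = \<epsilon>*E*(1 + (N+1)*(\<epsilon>*p - 1))"
proof -
  have qr: "q*r = 2*\<epsilon>*p - p*p - 1" using det tr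
    by (metis (no_types, lifting) add_diff_cancel_left' diff_add_cancel diff_diff_eq2 eq_diff_eq left_diff_distrib' mult.commute right_diff_distrib')
  have "p*(E*(1 + N*(\<epsilon>*p - 1))) + q*(E*(N*\<epsilon>*r)) = E*(p + N*\<epsilon>*p*p - N*p + N*\<epsilon>*(q*r))"
    by (simp add: algebra_simps)
  also have "\<dots> = E*(p + N*\<epsilon>*p*p - N*p + N*\<epsilon>*(2*\<epsilon>*p - p*p - 1))" unfolding qr ..
  also have "\<dots> = E*(p + N*p*(2*(\<epsilon>*\<epsilon>) - 1) - N*\<epsilon>)" by (simp add: algebra_simps)
  also have "\<dots> = E*(p + N*p - N*\<epsilon>)" using eps by simp
  also have "\<dots> = \<epsilon>*E*(1 + (N+1)*(\<epsilon>*p - 1))" 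
  proof -
    have "\<epsilon>*E*(1 + (N+1)*(\<epsilon>*p - 1)) = E*(\<epsilon> + (N+1)*((\<epsilon>*\<epsilon>)*p - \<epsilon>))" by (simp add: algebra_simps)
    then show ?thesis using eps by (simp add: algebra_simps)
  qed
  finally show ?thesis .
qed

lemma ent12:
  fixes p q r w \<epsilon> N E :: "'a::field"
  assumes eps: "\<epsilon>*\<epsilon> = 1" and tr: "p + w = 2*\<epsilon>"
  shows "p*(E*(N*\<epsilon>*q)) + q*(E*(1 + N*(\<epsilon>*w - 1))) = \<epsilon>*E*((N+1)*\<epsilon>*q)"
proof -
  have "p*(E*(N*\<epsilon>*q)) + q*(E*(1 + N*(\<epsilon>*w - 1))) = E*q*(N*\<epsilon>*(p+w) + 1 - N)"
    by (simp add: algebra_simps)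
  also have "\<dots> = E*q*(N*(2*(\<epsilon>*\<epsilon>)) + 1 - N)" unfolding tr by (simp add: algebra_simps)
  also have "\<dots> = E*q*(N+1)" using eps by simp
  also have "\<dots> = (\<epsilon>*\<epsilon>)*E*((N+1)*q)" using eps by simp
  finally show ?thesis by (simp add: algebra_simps)
qed

lemma ent21:
  fixes p q r w \<epsilon> N E :: "'a::field"
  assumes eps: "\<epsilon>*\<epsilon> = 1" and tr: "p + w = 2*\<epsilon>"
  shows "r*(E*(1 + N*(\<epsilon>*p - 1))) + w*(E*(N*\<epsilon>*r)) = \<epsilon>*E*((N+1)*\<epsilon>*r)"
proof -
  have "r*(E*(1 + N*(\<epsilon>*p - 1))) + w*(E*(N*\<epsilon>*r)) = E*r*(N*\<epsilon>*(p+w) + 1 - N)"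
    by (simp add: algebra_simps)
  also have "\<dots> = E*r*(N*(2*(\<epsilon>*\<epsilon>)) + 1 - N)" unfolding tr by (simp add: algebra_simps)
  also have "\<dots> = E*r*(N+1)" using eps by simp
  also have "\<dots> = (\<epsilon>*\<epsilon>)*E*((N+1)*r)" using eps by simp
  finally show ?thesis by (simp add: algebra_simps)
qed

lemma ent22:
  fixes p q r w \<epsilon> N E :: "'a::field"
  assumes eps: "\<epsilon>*\<epsilon> = 1" and tr: "p + w = 2*\<epsilon>" and det: "p*w - q*r = 1"
  shows "r*(E*(N*\<epsilon>*q)) + w*(E*(1 + N*(\<epsilon>*w - 1))) = \<epsilon>*E*(1 + (N+1)*(\<epsilon>*w - 1))"
proof -
  have "w*(E*(1 + N*(\<epsilon>*w - 1))) + q*(E*(N*\<epsilon>*r)) = \<epsilon>*E*(1 + (N+1)*(\<epsilon>*w - 1))"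
    by (rule ent11[of \<epsilon> w p q r]) (use assms in \<open>simp_all add: algebra_simps\<close>)
  then show ?thesis by (simp add: algebra_simps)
qed

lemma mpow_unip:
  fixes p q r w \<epsilon> :: "'a::field"
  assumes eps: "\<epsilon>^2 = 1" and tr: "p + w = 2*\<epsilon>" and det: "p*w - q*r = 1"
  shows "mpow (mk p q r w) n = mk (\<epsilon>^n*(1 + of_nat n*(\<epsilon>*p - 1))) (\<epsilon>^n*(of_nat n*\<epsilon>*q))
                                  (\<epsilon>^n*(of_nat n*\<epsilon>*r)) (\<epsilon>^n*(1 + of_nat n*(\<epsilon>*w - 1)))"
proof (induction n)
  case 0
  then show ?case by (simp add: mat1_mk)
next
  case (Suc n)
  define N where "N = (of_nat n :: 'a)"
  define E where "E = \<epsilon>^n"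
  have "mpow (mk p q r w) (Suc n) = mk p q r w ** mpow (mk p q r w) n" by simp
  also have "\<dots> = mk p q r w ** mk (E*(1 + N*(\<epsilon>*p - 1))) (E*(N*\<epsilon>*q)) (E*(N*\<epsilon>*r)) (E*(1 + N*(\<epsilon>*w - 1)))"
    using Suc.IH unfolding N_def E_def by simp
  also have "\<dots> = mk (\<epsilon>*E*(1 + (N+1)*(\<epsilon>*p - 1))) (\<epsilon>*E*((N+1)*\<epsilon>*q))
                                  (\<epsilon>*E*((N+1)*\<epsilon>*r)) (\<epsilon>*E*(1 + (N+1)*(\<epsilon>*w - 1)))"
  proof -
    have e: "\<epsilon>*\<epsilon> = 1" using eps by (simp add: power2_eq_square)
    show ?thesis unfolding mk_mult mk_eq
      using ent11[OF e tr det, where E=E and N=N] ent12[OF e tr, where E=E and N=N and q=q] ent21[OF e tr, where E=E and N=N and r=r] ent22[OF e tr det, where E=E and N=N]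
      by simp
  qed
  finally show ?case unfolding N_def E_def by (simp add: algebra_simps)
qed



theorem theorem6p5:
  fixes x :: "'a::{field,finite} ^ 2 ^ 2"
  assumes "\<forall>k. CARD('a) - 1 \<noteq> 2 ^ k"
      and "\<forall>k. CARD('a) \<noteq> 2 ^ k"
      and "\<forall>k. CARD('a) + 1 \<noteq> 2 ^ k"
      and "x \<in> SL2"
      and "two_element x"
  shows "((CARD('a) - 1) dvd card (centralizer_SL2 x) \<or> (CARD('a) + 1) dvd card (centralizer_SL2 x))
         \<and> \<not> (\<exists>k. card (centralizer_SL2 x) = 2 ^ k)"
proof -
  have two: "(2::'a) \<noteq> 0" using char2_card[where 'a='a] assms(2) by blast
  obtain a b c d where x: "x = mk a b c d" using mk_surj by blast
  have det: "a*d - b*c = 1" using assms(4) unfolding x SL2_def by simp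
  show ?thesis
  proof (cases "b = 0 \<and> c = 0 \<and> a = d")
    case True
    then have cen: "centralizer_SL2 x = SL2" unfolding x using centralizer_scalar by blast
    let ?q = "CARD('a)"
    have "(?q - 1) dvd ?q * (?q - 1) * (?q + 1)" by simp
    moreover have "\<not> (\<exists>k. ?q * (?q - 1) * (?q + 1) = 2 ^ k)"
    proof
      assume "\<exists>k. ?q * (?q - 1) * (?q + 1) = 2 ^ k"
      then obtain k where k: "?q * (?q - 1) * (?q + 1) = 2 ^ k" by blast
      have "?q dvd 2 ^ k" unfolding k[symmetric] by (metis dvd_mult2 dvd_triv_left)
      then obtain i where "?q = 2 ^ i" using dvd_pow2 by blast
      then show False using assms(2) by blast
    qed
    ultimately show ?thesis unfolding cen card_SL2 by blast
  next
    case False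
    define t where "t = a + d"
    have t4: "t^2 \<noteq> 4"
    proof
      assume t4: "t^2 = 4"
      have "(t - 2)*(t + 2) = 0" using t4 by (simp add: algebra_simps power2_eq_square)
      then have "t = 2 \<or> t = -2" by (auto simp: eq_neg_iff_add_eq_0)
      then have "\<exists>\<epsilon>::'a. \<epsilon>^2 = 1 \<and> a + d = 2*\<epsilon>"
      proof
        assume "t = 2" then show ?thesis unfolding t_def by (intro exI[of _ 1]) simp
      next
        assume "t = -2" then show ?thesis unfolding t_def by (intro exI[of _ "-1"]) simp
      qed
      then obtain \<epsilon> :: 'a where eps: "\<epsilon>^2 = 1" "a + d = 2*\<epsilon>" by blast
      obtain k where k: "mpow x (2^k) = mat 1" using assms(5) unfolding two_element_def by blast
      define n :: nat where "n = 2^k"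
      have N0: "(of_nat n :: 'a) \<noteq> 0" unfolding n_def using two by simp
      have e0: "\<epsilon>^n \<noteq> 0" using eps(1) by (metis power_not_zero zero_neq_one zero_power2)
      have e1: "\<epsilon> \<noteq> 0" using eps(1) by (metis zero_neq_one zero_power2)
      have "mk (\<epsilon>^n*(1 + of_nat n*(\<epsilon>*a - 1))) (\<epsilon>^n*(of_nat n*\<epsilon>*b))
               (\<epsilon>^n*(of_nat n*\<epsilon>*c)) (\<epsilon>^n*(1 + of_nat n*(\<epsilon>*d - 1))) = mk 1 0 0 1"
        using k mpow_unip[OF eps det, of n] unfolding x n_def mat1_mk by simp
      then have h: "\<epsilon>^n*(1 + of_nat n*(\<epsilon>*a - 1)) = 1" "\<epsilon>^n*(of_nat n*\<epsilon>*b) = 0"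
        "\<epsilon>^n*(of_nat n*\<epsilon>*c) = 0" "\<epsilon>^n*(1 + of_nat n*(\<epsilon>*d - 1)) = 1" by simp_all
      have "b = 0" using h(2) N0 e0 e1 by simp
      moreover have "c = 0" using h(3) N0 e0 e1 by simp
      moreover have "1 + of_nat n*(\<epsilon>*a - 1) = 1 + of_nat n*(\<epsilon>*d - 1)"
        using h(1) h(4) e0 by (metis mult_left_cancel)
      then have "a = d" using N0 e1 by simp
      ultimately show False using False by simp
    qed
    have cen: "centralizer_SL2 x = (\<lambda>(\<alpha>,\<beta>). mk (\<alpha>+\<beta>*a) (\<beta>*b) (\<beta>*c) (\<alpha>+\<beta>*d)) ` {(\<alpha>,\<beta>). \<alpha>^2 + (a+d)*\<alpha>*\<beta> + \<beta>^2 = 1}"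
      and inj: "inj_on (\<lambda>(\<alpha>,\<beta>). mk (\<alpha>+\<beta>*a) (\<beta>*b) (\<beta>*c) (\<alpha>+\<beta>*d)) {(\<alpha>,\<beta>). \<alpha>^2 + (a+d)*\<alpha>*\<beta> + \<beta>^2 = 1}"
      using centralizer_nonscalar[OF det False] unfolding x by blast+
    have "card (centralizer_SL2 x) = card {(\<alpha>,\<beta>). \<alpha>^2 + t*\<alpha>*\<beta> + \<beta>^2 = (1::'a)}"
      unfolding cen t_def by (rule card_image[OF inj])
    then have "card (centralizer_SL2 x) = CARD('a) - 1 \<or> card (centralizer_SL2 x) = CARD('a) + 1"
      using conic_gen[OF two t4] by simp
    then show ?thesis using assms(1,3) by (metis dvd_refl)
  qed
qed

end
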